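(* Let $G$ be a simple graph on $n$ vertices with at least one edge that is both vertex-transitive and edge-transitive, and suppose $\alpha(G)\,\omega(G)=n$. Then $G$ is $k$-regular for some $k$ and $$\lambda(G)=-\frac{k}{\omega(G)-1}.$$
   Context: $\lambda(G)$ is the smallest adjacency eigenvalue, $\alpha(G)$ the independence number and $\omega(G)$ the clique number of $G$. *)

theory Defs
  imports "HOL-Analysis.Analysis"
begin

text \<open>Simple graphs on a finite vertex type 'n (so n = CARD('n)),
 given by an adjacency relation E.\<close>

definition simple_graph :: "('n \<Rightarrow> 'n \<Rightarrow> bool) \<Rightarrow> bool" where
  "simple_graph E \<longleftrightarrow> (\<forall>x y. E x y \<longrightarrow> E y x) \<and> (\<forall>x. \<not> E x x)"

definition has_edge :: "('n \<Rightarrow> 'n \<Rightarrow> bool) \<Rightarrow> bool" where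
  "has_edge E \<longleftrightarrow> (\<exists>x y. E x y)"

definition automorphism :: "('n \<Rightarrow> 'n \<Rightarrow> bool) \<Rightarrow> ('n \<Rightarrow> 'n) \<Rightarrow> bool" where
  "automorphism E \<sigma> \<longleftrightarrow> bij \<sigma> \<and> (\<forall>x y. E (\<sigma> x) (\<sigma> y) \<longleftrightarrow> E x y)"

definition vertex_transitive :: "('n \<Rightarrow> 'n \<Rightarrow> bool) \<Rightarrow> bool" where
  "vertex_transitive E \<longleftrightarrow> (\<forall>x y. \<exists>\<sigma>. automorphism E \<sigma> \<and> \<sigma> x = y)"

definition edge_transitive :: "('n \<Rightarrow> 'n \<Rightarrow> bool) \<Rightarrow> bool" where
  "edge_transitive E \<longleftrightarrow>
     (\<forall>x y u v. E x y \<longrightarrow> E u v \<longrightarrow>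
        (\<exists>\<sigma>. automorphism E \<sigma> \<and> \<sigma> ` {x, y} = {u, v}))"

definition independent_set :: "('n \<Rightarrow> 'n \<Rightarrow> bool) \<Rightarrow> 'n set \<Rightarrow> bool" where
  "independent_set E S \<longleftrightarrow> (\<forall>x\<in>S. \<forall>y\<in>S. \<not> E x y)"

definition clique :: "('n \<Rightarrow> 'n \<Rightarrow> bool) \<Rightarrow> 'n set \<Rightarrow> bool" where
  "clique E S \<longleftrightarrow> (\<forall>x\<in>S. \<forall>y\<in>S. x \<noteq> y \<longrightarrow> E x y)"

definition independence_number :: "('n::finite \<Rightarrow> 'n \<Rightarrow> bool) \<Rightarrow> nat" where
  "independence_number E = Max {card S | S. independent_set E S}"

definition clique_number :: "('n::finite \<Rightarrow> 'n \<Rightarrow> bool) \<Rightarrow> nat" where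
  "clique_number E = Max {card S | S. clique E S}"

definition regular :: "('n::finite \<Rightarrow> 'n \<Rightarrow> bool) \<Rightarrow> nat \<Rightarrow> bool" where
  "regular E k \<longleftrightarrow> (\<forall>x. card {y. E x y} = k)"

definition adjacency_matrix :: "('n::finite \<Rightarrow> 'n \<Rightarrow> bool) \<Rightarrow> real^'n^'n" where
  "adjacency_matrix E = (\<chi> i j. if E i j then 1 else 0)"

text \<open>Eigenvalues of the (real symmetric) adjacency matrix; all of them are real.\<close>
definition adj_eigenvalue :: "('n::finite \<Rightarrow> 'n \<Rightarrow> bool) \<Rightarrow> real \<Rightarrow> bool" where
  "adj_eigenvalue E l \<longleftrightarrow> (\<exists>v::real^'n. v \<noteq> 0 \<and> adjacency_matrix E *v v = l *\<^sub>R v)"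

definition smallest_eigenvalue :: "('n::finite \<Rightarrow> 'n \<Rightarrow> bool) \<Rightarrow> real" where
  "smallest_eigenvalue E = Min {l. adj_eigenvalue E l}"

end

theory Submission
  imports Defs
begin


lemma aut_comp: "automorphism E \<sigma> \<Longrightarrow> automorphism E \<rho> \<Longrightarrow> automorphism E (\<sigma> \<circ> \<rho>)"
  unfolding automorphism_def by (auto intro: bij_comp)

lemma aut_inv: assumes "automorphism E \<rho>" shows "automorphism E (inv \<rho>)"
proof -
  have b: "bij \<rho>" using assms by (simp add: automorphism_def)
  have "E (inv \<rho> x) (inv \<rho> y) \<longleftrightarrow> E x y" for x y
    using assms[unfolded automorphism_def, THEN conjunct2, rule_format, of "inv \<rho> x" "inv \<rho> y"]
    by (simp add: b bij_is_surj surj_f_inv_f)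
  thus ?thesis using b bij_imp_bij_inv by (auto simp: automorphism_def)
qed

lemma sum_aut_shift:
  assumes "automorphism E \<rho>"
  shows "(\<Sum>\<sigma>\<in>{\<sigma>. automorphism E \<sigma>}. F (\<sigma> \<circ> \<rho>)) = (\<Sum>\<sigma>\<in>{\<sigma>. automorphism E \<sigma>}. F \<sigma>)"
proof (rule sum.reindex_bij_betw)
  have b: "bij \<rho>" using assms by (simp add: automorphism_def)
  show "bij_betw (\<lambda>\<sigma>. \<sigma> \<circ> \<rho>) {\<sigma>. automorphism E \<sigma>} {\<sigma>. automorphism E \<sigma>}"
  proof (rule bij_betw_byWitness[where f'="\<lambda>\<sigma>. \<sigma> \<circ> inv \<rho>"])
    show "\<forall>a\<in>{\<sigma>. automorphism E \<sigma>}. a \<circ> \<rho> \<circ> inv \<rho> = a"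
      using b by (simp add: comp_assoc bij_is_surj surj_iff[THEN iffD1])
    show "\<forall>a\<in>{\<sigma>. automorphism E \<sigma>}. a \<circ> inv \<rho> \<circ> \<rho> = a"
      using b by (simp add: comp_assoc bij_is_inj inj_iff[THEN iffD1])
    show "(\<lambda>\<sigma>. \<sigma> \<circ> \<rho>) ` {\<sigma>. automorphism E \<sigma>} \<subseteq> {\<sigma>. automorphism E \<sigma>}"
      using assms aut_comp by blast
    show "(\<lambda>\<sigma>. \<sigma> \<circ> inv \<rho>) ` {\<sigma>. automorphism E \<sigma>} \<subseteq> {\<sigma>. automorphism E \<sigma>}"
      using aut_inv[OF assms] aut_comp by blast
  qed
qed

lemma sum_bij_UNIV: "bij \<sigma> \<Longrightarrow> (\<Sum>y\<in>UNIV. g (\<sigma> y)) = (\<Sum>z\<in>UNIV. g z)"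
  by (rule sum.reindex_bij_betw)

lemma vt_avg:
  fixes E :: "'n::finite \<Rightarrow> 'n \<Rightarrow> bool"
  assumes vt: "vertex_transitive E"
  shows "real CARD('n) * (\<Sum>\<sigma>\<in>{\<sigma>. automorphism E \<sigma>}. g (\<sigma> x))
       = real (card {\<sigma>. automorphism E \<sigma>}) * (\<Sum>z\<in>UNIV. g z)"
proof -
  let ?G = "{\<sigma>. automorphism E \<sigma>}"
  have eq: "(\<Sum>\<sigma>\<in>?G. g (\<sigma> y)) = (\<Sum>\<sigma>\<in>?G. g (\<sigma> x))" for y
  proof -
    obtain \<rho> where r: "automorphism E \<rho>" "\<rho> y = x" using vt unfolding vertex_transitive_def by blast
    have "(\<Sum>\<sigma>\<in>?G. g (\<sigma> x)) = (\<Sum>\<sigma>\<in>?G. (\<lambda>\<tau>. g (\<tau> y)) (\<sigma> \<circ> \<rho>))" using r by simp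
    also have "\<dots> = (\<Sum>\<sigma>\<in>?G. g (\<sigma> y))" by (rule sum_aut_shift[OF r(1)])
    finally show ?thesis by simp
  qed
  have "(\<Sum>y\<in>UNIV. \<Sum>\<sigma>\<in>?G. g (\<sigma> y)) = (\<Sum>y\<in>(UNIV::'n set). \<Sum>\<sigma>\<in>?G. g (\<sigma> x))"
    by (rule sum.cong[OF refl], rule eq)
  hence "real CARD('n) * (\<Sum>\<sigma>\<in>?G. g (\<sigma> x)) = (\<Sum>y\<in>UNIV. \<Sum>\<sigma>\<in>?G. g (\<sigma> y))"
    by simp
  also have "\<dots> = (\<Sum>\<sigma>\<in>?G. \<Sum>y\<in>UNIV. g (\<sigma> y))" by (rule sum.swap)
  also have "\<dots> = (\<Sum>\<sigma>\<in>?G. \<Sum>z\<in>UNIV. g z)"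
    by (rule sum.cong[OF refl]) (simp add: automorphism_def sum_bij_UNIV)
  also have "\<dots> = real (card ?G) * (\<Sum>z\<in>UNIV. g z)" by simp
  finally show ?thesis .
qed

lemma et_avg:
  fixes E :: "'n::finite \<Rightarrow> 'n \<Rightarrow> bool"
  assumes et: "edge_transitive E" and sg: "simple_graph E"
    and e1: "E x y" and e2: "E u w"
    and hs: "\<And>a b. h a b = h b a"
  shows "(\<Sum>\<sigma>\<in>{\<sigma>. automorphism E \<sigma>}. h (\<sigma> u) (\<sigma> w))
       = (\<Sum>\<sigma>\<in>{\<sigma>. automorphism E \<sigma>}. h (\<sigma> x) (\<sigma> y))"
proof -
  let ?G = "{\<sigma>. automorphism E \<sigma>}"
  obtain \<rho> where r: "automorphism E \<rho>" "\<rho> ` {x, y} = {u, w}"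
    using et e1 e2 unfolding edge_transitive_def by blast
  have xy: "x \<noteq> y" using sg e1 by (auto simp: simple_graph_def)
  have "inj \<rho>" using r(1) by (simp add: automorphism_def bij_is_inj)
  hence "\<rho> x \<noteq> \<rho> y" using xy by (simp add: inj_eq)
  hence cases: "(\<rho> x = u \<and> \<rho> y = w) \<or> (\<rho> x = w \<and> \<rho> y = u)" using r(2) by (auto simp: doubleton_eq_iff)
  have "(\<Sum>\<sigma>\<in>?G. h (\<sigma> x) (\<sigma> y)) = (\<Sum>\<sigma>\<in>?G. (\<lambda>\<tau>. h (\<tau> x) (\<tau> y)) (\<sigma> \<circ> \<rho>))"
    by (rule sum_aut_shift[OF r(1), symmetric])
  also have "\<dots> = (\<Sum>\<sigma>\<in>?G. h (\<sigma> u) (\<sigma> w))"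
  proof (cases "\<rho> x = u \<and> \<rho> y = w")
    case True thus ?thesis by (intro sum.cong refl) (simp only: comp_apply)
  next
    case False
    hence "\<rho> x = w" "\<rho> y = u" using cases by auto
    thus ?thesis by (intro sum.cong refl) (simp only: comp_apply, rule hs)
  qed
  finally show ?thesis by (rule sym)
qed

lemma edge_sum_aut:
  assumes "automorphism E \<sigma>"
  shows "(\<Sum>u\<in>UNIV. \<Sum>w\<in>UNIV. if E u w then h (\<sigma> u) (\<sigma> w) else 0)
       = (\<Sum>a\<in>UNIV. \<Sum>b\<in>UNIV. if E a b then h a b else (0::real))"
proof -
  have b: "bij \<sigma>" and e: "\<And>x y. E (\<sigma> x) (\<sigma> y) \<longleftrightarrow> E x y" using assms by (auto simp: automorphism_def)
  have "(\<Sum>u\<in>UNIV. \<Sum>w\<in>UNIV. if E u w then h (\<sigma> u) (\<sigma> w) else 0)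
      = (\<Sum>u\<in>UNIV. \<Sum>w\<in>UNIV. (\<lambda>b. if E (\<sigma> u) b then h (\<sigma> u) b else 0) (\<sigma> w))" by (simp add: e)
  also have "\<dots> = (\<Sum>u\<in>UNIV. (\<lambda>a. \<Sum>b\<in>UNIV. if E a b then h a b else 0) (\<sigma> u))"
    by (rule sum.cong[OF refl], rule sum_bij_UNIV[OF b])
  also have "\<dots> = (\<Sum>a\<in>UNIV. \<Sum>b\<in>UNIV. if E a b then h a b else 0)" by (rule sum_bij_UNIV[OF b])
  finally show ?thesis .
qed



definition Qf :: "('n::finite \<Rightarrow> 'n \<Rightarrow> bool) \<Rightarrow> ('n \<Rightarrow> real) \<Rightarrow> real" where
  "Qf E v = (\<Sum>i\<in>UNIV. \<Sum>j\<in>UNIV. if E i j then v i * v j else 0)"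

lemma sum_if_const: "finite A \<Longrightarrow> (\<Sum>w\<in>A. if P w then c else (0::real)) = real (card {w\<in>A. P w}) * c"
  by (simp add: sum.If_cases Int_def conj_commute)

lemma clique_sq:
  fixes f :: "'n \<Rightarrow> real"
  assumes sg: "simple_graph E" and cl: "clique E C" and fin: "finite C"
  shows "0 \<le> (\<Sum>x\<in>C. \<Sum>y\<in>C. if E x y then f x * f y else 0) + (\<Sum>x\<in>C. (f x)\<^sup>2)"
proof -
  have "0 \<le> (\<Sum>x\<in>C. f x)\<^sup>2" by simp
  also have "\<dots> = (\<Sum>x\<in>C. \<Sum>y\<in>C. f x * f y)" by (simp add: power2_eq_square sum_product)
  also have "\<dots> = (\<Sum>x\<in>C. \<Sum>y\<in>C. (if E x y then f x * f y else 0) + (if x = y then (f x)\<^sup>2 else 0))"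
  proof (intro sum.cong refl)
    fix x y assume "x \<in> C" "y \<in> C"
    thus "f x * f y = (if E x y then f x * f y else 0) + (if x = y then (f x)\<^sup>2 else 0)"
      using sg cl by (auto simp: simple_graph_def clique_def power2_eq_square)
  qed
  also have "\<dots> = (\<Sum>x\<in>C. \<Sum>y\<in>C. if E x y then f x * f y else 0) + (\<Sum>x\<in>C. (f x)\<^sup>2)"
    using fin by (simp add: sum.distrib)
  finally show ?thesis .
qed

lemma quad_bound:
  fixes E :: "'n::finite \<Rightarrow> 'n \<Rightarrow> bool"
  assumes sg: "simple_graph E" and he: "has_edge E" and vt: "vertex_transitive E"
    and et: "edge_transitive E" and cl: "clique E C" and reg: "regular E k"
    and cne: "card C \<ge> 1"
  shows "0 \<le> (real (card C) - 1) * Qf E v + real k * (\<Sum>i\<in>UNIV. (v i)\<^sup>2)"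
proof -
  let ?G = "{\<sigma>. automorphism E \<sigma>}"
  define G where "G = real (card ?G)"
  define n where "n = real CARD('n)"
  define N where "N = (\<Sum>i\<in>UNIV. (v i)\<^sup>2)"
  define c where "c = real (card C)"
  have finG: "finite ?G" by simp
  have "id \<in> ?G" by (simp add: automorphism_def)
  hence Gpos: "G > 0" unfolding G_def using finG by (auto simp: card_gt_0_iff)
  have npos: "n > 0" unfolding n_def by simp
  obtain x0 y0 where e0: "E x0 y0" using he by (auto simp: has_edge_def)
  define Se where "Se = (\<Sum>\<sigma>\<in>?G. v (\<sigma> x0) * v (\<sigma> y0))"
  have Se_eq: "E x y \<Longrightarrow> (\<Sum>\<sigma>\<in>?G. v (\<sigma> x) * v (\<sigma> y)) = Se" for x y
    unfolding Se_def by (rule et_avg[OF et sg e0], assumption, simp)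
  have "(\<Sum>u\<in>UNIV. \<Sum>w\<in>UNIV. if E u w then (\<Sum>\<sigma>\<in>?G. v (\<sigma> u) * v (\<sigma> w)) else 0)
      = (\<Sum>u\<in>UNIV. \<Sum>w\<in>UNIV. if E u w then Se else 0)"
    by (intro sum.cong refl) (simp add: Se_eq)
  also have "\<dots> = n * real k * Se"
    using reg by (simp add: sum_if_const regular_def n_def)
  finally have L1: "(\<Sum>u\<in>UNIV. \<Sum>w\<in>UNIV. if E u w then (\<Sum>\<sigma>\<in>?G. v (\<sigma> u) * v (\<sigma> w)) else 0)
      = n * real k * Se" .
  have "(\<Sum>u\<in>UNIV. \<Sum>w\<in>UNIV. if E u w then (\<Sum>\<sigma>\<in>?G. v (\<sigma> u) * v (\<sigma> w)) else 0)
      = (\<Sum>u\<in>UNIV. \<Sum>w\<in>UNIV. \<Sum>\<sigma>\<in>?G. if E u w then v (\<sigma> u) * v (\<sigma> w) else 0)"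
    by (intro sum.cong refl) simp
  also have "\<dots> = (\<Sum>u\<in>UNIV. \<Sum>\<sigma>\<in>?G. \<Sum>w\<in>UNIV. if E u w then v (\<sigma> u) * v (\<sigma> w) else 0)"
    by (intro sum.cong refl sum.swap)
  also have "\<dots> = (\<Sum>\<sigma>\<in>?G. \<Sum>u\<in>UNIV. \<Sum>w\<in>UNIV. if E u w then v (\<sigma> u) * v (\<sigma> w) else 0)"
    by (rule sum.swap)
  also have "\<dots> = (\<Sum>\<sigma>\<in>?G. Qf E v)"
    unfolding Qf_def
  proof (rule sum.cong[OF refl])
    fix \<sigma> assume "\<sigma> \<in> ?G"
    hence "automorphism E \<sigma>" by simp
    from edge_sum_aut[OF this, of "\<lambda>a b. v a * v b"]
    show "(\<Sum>u\<in>UNIV. \<Sum>w\<in>UNIV. if E u w then v (\<sigma> u) * v (\<sigma> w) else 0) =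
      (\<Sum>i\<in>UNIV. \<Sum>j\<in>UNIV. if E i j then v i * v j else 0)" by simp
  qed
  also have "\<dots> = G * Qf E v" by (simp add: G_def)
  finally have L2: "n * real k * Se = G * Qf E v" using L1 by simp
  have V: "(\<Sum>\<sigma>\<in>?G. (v (\<sigma> x))\<^sup>2) = G * N / n" for x
    using vt_avg[OF vt, of "\<lambda>z. (v z)\<^sup>2" x] npos by (simp add: G_def N_def n_def field_simps)
  have finC: "finite C" by simp
  have "0 \<le> (\<Sum>\<sigma>\<in>?G. (\<Sum>x\<in>C. \<Sum>y\<in>C. if E x y then v (\<sigma> x) * v (\<sigma> y) else 0) + (\<Sum>x\<in>C. (v (\<sigma> x))\<^sup>2))"
    by (intro sum_nonneg clique_sq[OF sg cl finC, where f="\<lambda>x. v (\<sigma> x)" for \<sigma>])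
  also have "\<dots> = (\<Sum>x\<in>C. \<Sum>y\<in>C. \<Sum>\<sigma>\<in>?G. if E x y then v (\<sigma> x) * v (\<sigma> y) else 0)
        + (\<Sum>x\<in>C. \<Sum>\<sigma>\<in>?G. (v (\<sigma> x))\<^sup>2)"
    by (simp add: sum.distrib sum.swap[of _ ?G] sum.swap[of _ ?G C])
  also have "\<dots> = (\<Sum>x\<in>C. \<Sum>y\<in>C. if E x y then Se else 0) + (\<Sum>x\<in>C. G * N / n)"
    by (intro arg_cong2[where f="(+)"] sum.cong refl) (auto simp: V Se_eq)
  also have "\<dots> = (\<Sum>x\<in>C. real (card C - 1) * Se) + c * (G * N / n)"
  proof -
    have "{y \<in> C. E x y} = C - {x}" if "x \<in> C" for x
      using that sg cl by (auto simp: simple_graph_def clique_def)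
    thus ?thesis by (intro arg_cong2[where f="(+)"] sum.cong refl) (auto simp: sum_if_const c_def)
  qed
  also have "\<dots> = c * (c - 1) * Se + c * G * N / n"
  proof -
    show ?thesis using cne by (simp add: c_def of_nat_diff)
  qed
  finally have ineq: "0 \<le> c * (c - 1) * Se + c * G * N / n" .
  have cpos: "c > 0" using cne by (simp add: c_def)
  have "0 \<le> (n * real k) * (c * (c - 1) * Se + c * G * N / n)"
    using npos ineq by simp
  also have "\<dots> = c * (c - 1) * (n * real k * Se) + c * G * N * real k"
    using npos by (simp add: field_simps)
  also have "\<dots> = (c * G) * ((c - 1) * Qf E v + real k * N)"
    unfolding L2 by (simp add: algebra_simps)
  finally have "0 \<le> (c * G) * ((c - 1) * Qf E v + real k * N)" .
  moreover have "c * G > 0" using cpos Gpos by simp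
  ultimately have "0 \<le> (c - 1) * Qf E v + real k * N"
    by (simp add: zero_le_mult_iff)
  thus ?thesis by (simp add: c_def N_def)
qed


lemma adj_mult: "(adjacency_matrix E *v x) $ i = (\<Sum>j\<in>UNIV. if E i j then x$j else 0)"
  by (auto simp: matrix_vector_mult_def adjacency_matrix_def intro!: sum.cong)

lemma psd_expand:
  fixes M :: "'n::finite \<Rightarrow> 'n \<Rightarrow> real"
  shows "(\<Sum>i\<in>UNIV. \<Sum>j\<in>UNIV. M i j * (a i - t * b i) * (a j - t * b j))
   = (\<Sum>i\<in>UNIV. \<Sum>j\<in>UNIV. M i j * a i * a j) - t * (\<Sum>i\<in>UNIV. \<Sum>j\<in>UNIV. M i j * b i * a j)
     - t * (\<Sum>i\<in>UNIV. \<Sum>j\<in>UNIV. M i j * a i * b j) + t\<^sup>2 * (\<Sum>i\<in>UNIV. \<Sum>j\<in>UNIV. M i j * b i * b j)"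
proof -
  have "(\<Sum>i\<in>UNIV. \<Sum>j\<in>UNIV. M i j * (a i - t * b i) * (a j - t * b j))
     = (\<Sum>i\<in>UNIV. \<Sum>j\<in>UNIV. M i j * a i * a j - t * (M i j * b i * a j) - t * (M i j * a i * b j) + t\<^sup>2 * (M i j * b i * b j))"
    by (intro sum.cong refl) (simp add: algebra_simps power2_eq_square)
  also have "\<dots> = (\<Sum>i\<in>UNIV. \<Sum>j\<in>UNIV. M i j * a i * a j) - t * (\<Sum>i\<in>UNIV. \<Sum>j\<in>UNIV. M i j * b i * a j)
     - t * (\<Sum>i\<in>UNIV. \<Sum>j\<in>UNIV. M i j * a i * b j) + t\<^sup>2 * (\<Sum>i\<in>UNIV. \<Sum>j\<in>UNIV. M i j * b i * b j)"
    by (simp add: sum.distrib sum_subtractf sum_distrib_left)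
  finally show ?thesis .
qed

lemma psd_zero:
  fixes M :: "'n::finite \<Rightarrow> 'n \<Rightarrow> real"
  assumes sym: "\<And>i j. M i j = M j i"
    and psd: "\<And>w. 0 \<le> (\<Sum>i\<in>UNIV. \<Sum>j\<in>UNIV. M i j * w i * w j)"
    and z: "(\<Sum>i\<in>UNIV. \<Sum>j\<in>UNIV. M i j * a i * a j) = 0"
  shows "(\<Sum>j\<in>UNIV. M i j * a j) = 0"
proof -
  define r where "r i = (\<Sum>j\<in>UNIV. M i j * a j)" for i
  define R where "R = (\<Sum>i\<in>UNIV. r i * r i)"
  define Pr where "Pr = (\<Sum>i\<in>UNIV. \<Sum>j\<in>UNIV. M i j * r i * r j)"
  have h1: "(\<Sum>i\<in>UNIV. \<Sum>j\<in>UNIV. M i j * r i * a j) = R"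
    unfolding R_def r_def[of i for i] by (simp add: sum_distrib_left mult_ac)
  have "(\<Sum>i\<in>UNIV. \<Sum>j\<in>UNIV. M i j * a i * r j) = (\<Sum>j\<in>UNIV. \<Sum>i\<in>UNIV. M i j * a i * r j)"
    by (rule sum.swap)
  also have "\<dots> = (\<Sum>j\<in>UNIV. \<Sum>i\<in>UNIV. M j i * r j * a i)"
    by (simp add: sym mult_ac)
  also have "\<dots> = R" using h1 by simp
  finally have h2: "(\<Sum>i\<in>UNIV. \<Sum>j\<in>UNIV. M i j * a i * r j) = R" .
  have key: "2 * (R * t) \<le> t\<^sup>2 * Pr" for t
    using psd[of "\<lambda>i. a i - t * r i"] psd_expand[of M a t r] z h1 h2 unfolding Pr_def by simp
  have Rge: "R \<ge> 0" unfolding R_def by (simp add: sum_nonneg)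
  have Prge: "Pr \<ge> 0" unfolding Pr_def by (rule psd)
  have R0: "R = 0"
  proof (rule ccontr)
    assume "R \<noteq> 0" hence Rp: "R > 0" using Rge by simp
    define t where "t = R / (Pr + 1)"
    have tp: "t > 0" using Rp Prge by (simp add: t_def)
    have "t * Pr < R" using Rp Prge by (simp add: t_def field_simps)
    hence "- 2 * R + t * Pr < 0" using Rp by simp
    hence "t * (- 2 * R + t * Pr) < 0" using tp by (simp add: mult_pos_neg)
    moreover have "t * (- 2 * R + t * Pr) = t\<^sup>2 * Pr - 2 * (R * t)" by (simp add: algebra_simps power2_eq_square)
    ultimately show False using key[of t] by linarith
  qed
  have "r i * r i = 0"
    using R0 unfolding R_def by (subst (asm) sum_nonneg_eq_0_iff) auto
  thus ?thesis by (simp add: r_def)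
qed



lemma vt_regular:
  assumes vt: "vertex_transitive E"
  shows "regular E (card {y. E x0 y})"
  unfolding regular_def
proof
  fix x
  obtain \<sigma> where s: "automorphism E \<sigma>" "\<sigma> x0 = x" using vt unfolding vertex_transitive_def by blast
  have b: "bij \<sigma>" and e: "\<And>a b. E (\<sigma> a) (\<sigma> b) \<longleftrightarrow> E a b" using s(1) by (auto simp: automorphism_def)
  have "{y. E x y} = \<sigma> ` {y. E x0 y}"
  proof
    show "\<sigma> ` {y. E x0 y} \<subseteq> {y. E x y}" using e s(2) by auto
    show "{y. E x y} \<subseteq> \<sigma> ` {y. E x0 y}"
    proof
      fix y assume "y \<in> {y. E x y}"
      hence "E (\<sigma> x0) (\<sigma> (inv \<sigma> y))" using s(2) b by (simp add: bij_is_surj surj_f_inv_f)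
      hence "E x0 (inv \<sigma> y)" using e by simp
      thus "y \<in> \<sigma> ` {y. E x0 y}" using b by (auto simp: bij_is_surj surj_f_inv_f intro!: image_eqI[where x="inv \<sigma> y"])
    qed
  qed
  thus "card {y. E x y} = card {y. E x0 y}"
    using b by (metis bij_is_inj card_image inj_on_subset subset_UNIV)
qed

lemma max_card:
  fixes P :: "'n::finite set \<Rightarrow> bool"
  assumes "P {}"
  shows "\<exists>S. P S \<and> card S = Max {card S | S. P S}"
    and "P T \<Longrightarrow> card T \<le> Max {card S | S. P S}"
proof -
  have eq: "{card S | S. P S} = card ` {S. P S}" by auto
  have fin: "finite {card S | S. P S}" unfolding eq by simp
  have ne: "{card S | S. P S} \<noteq> {}" using assms by auto
  from Max_in[OF fin ne] show "\<exists>S. P S \<and> card S = Max {card S | S. P S}" by auto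
  show "P T \<Longrightarrow> card T \<le> Max {card S | S. P S}" using fin by (auto intro: Max_ge)
qed

lemma indep_Q:
  fixes E :: "'n::finite \<Rightarrow> 'n \<Rightarrow> bool"
  assumes sg: "simple_graph E" and reg: "regular E k" and ind: "independent_set E S"
  shows "Qf E (\<lambda>i. (if i \<in> S then 1 else 0) - c) = c\<^sup>2 * real CARD('n) * real k - 2 * c * real (card S) * real k"
proof -
  define s where "s i = (if i \<in> S then 1 else (0::real))" for i
  have cs: "(\<Sum>i\<in>UNIV. s i) = real (card S)" unfolding s_def by (simp add: sum.If_cases)
  have row: "(\<Sum>j\<in>UNIV. if E i j then a else 0) = real k * a" for i a
    using reg by (simp add: sum_if_const regular_def)
  have col: "(\<Sum>i\<in>UNIV. if E i j then a else 0) = real k * a" for j a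
  proof -
    have "(\<Sum>i\<in>UNIV. if E i j then a else 0) = (\<Sum>i\<in>UNIV. if E j i then a else 0)"
      using sg by (intro sum.cong refl) (auto simp: simple_graph_def)
    thus ?thesis using row by simp
  qed
  have "Qf E (\<lambda>i. s i - c) = (\<Sum>i\<in>UNIV. \<Sum>j\<in>UNIV. (if E i j then s i * s j else 0)
      - c * (if E i j then s i else 0) - c * (if E i j then s j else 0) + c\<^sup>2 * (if E i j then 1 else 0))"
    unfolding Qf_def by (intro sum.cong refl) (simp add: algebra_simps power2_eq_square)
  also have "\<dots> = (\<Sum>i\<in>UNIV. \<Sum>j\<in>UNIV. if E i j then s i * s j else 0)
      - c * (\<Sum>i\<in>UNIV. \<Sum>j\<in>UNIV. if E i j then s i else 0)
      - c * (\<Sum>i\<in>UNIV. \<Sum>j\<in>UNIV. if E i j then s j else 0)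
      + c\<^sup>2 * (\<Sum>i\<in>UNIV. \<Sum>j\<in>UNIV. if E i j then 1 else 0)"
    by (simp add: sum.distrib sum_subtractf sum_distrib_left)
  also have "(\<Sum>i\<in>UNIV. \<Sum>j\<in>UNIV. if E i j then s i * s j else 0) = 0"
    using ind by (intro sum.neutral ballI) (auto simp: s_def independent_set_def)
  also have "(\<Sum>i\<in>UNIV. \<Sum>j\<in>UNIV. if E i j then s i else 0) = real k * real (card S)"
    by (simp add: row sum_distrib_left[symmetric] cs)
  also have "(\<Sum>i\<in>UNIV. \<Sum>j\<in>UNIV. if E i j then s j else 0) = real k * real (card S)"
    by (subst sum.swap) (simp add: col sum_distrib_left[symmetric] cs)
  also have "(\<Sum>i\<in>UNIV. \<Sum>j\<in>UNIV. if E i j then 1 else (0::real)) = real CARD('n) * real k"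
    by (simp add: row)
  finally show ?thesis by (simp add: s_def algebra_simps)
qed

lemma indep_N:
  shows "(\<Sum>i\<in>(UNIV::'n::finite set). ((if i \<in> S then 1 else 0) - c)\<^sup>2) = real (card S) - 2 * c * real (card S) + c\<^sup>2 * real CARD('n)"
proof -
  have "(\<Sum>i\<in>(UNIV::'n set). ((if i \<in> S then 1 else 0) - c)\<^sup>2)
     = (\<Sum>i\<in>(UNIV::'n set). (if i \<in> S then 1 else 0) - 2 * c * (if i \<in> S then 1 else 0) + c\<^sup>2)"
    by (intro sum.cong refl) (simp add: power2_eq_square algebra_simps)
  also have "\<dots> = real (card S) - 2 * c * real (card S) + c\<^sup>2 * real CARD('n)"
    by (simp add: sum.distrib sum_subtractf sum_distrib_left[symmetric] sum.If_cases)
  finally show ?thesis .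
qed



lemma eig_sym:
  fixes E :: "'n::finite \<Rightarrow> 'n \<Rightarrow> bool"
  assumes sg: "simple_graph E"
  shows "(adjacency_matrix E *v x) \<bullet> y = x \<bullet> (adjacency_matrix E *v y)"
proof -
  have "(adjacency_matrix E *v x) \<bullet> y = (\<Sum>i\<in>UNIV. \<Sum>j\<in>UNIV. if E i j then x$j * y$i else 0)"
    by (auto simp: inner_vec_def adj_mult sum_distrib_right intro!: sum.cong)
  also have "\<dots> = (\<Sum>j\<in>UNIV. \<Sum>i\<in>UNIV. if E i j then x$j * y$i else 0)" by (rule sum.swap)
  also have "\<dots> = (\<Sum>j\<in>UNIV. \<Sum>i\<in>UNIV. if E j i then x$j * y$i else 0)"
    using sg by (intro sum.cong refl) (auto simp: simple_graph_def)
  also have "\<dots> = x \<bullet> (adjacency_matrix E *v y)"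
    by (auto simp: inner_vec_def adj_mult sum_distrib_left intro!: sum.cong)
  finally show ?thesis .
qed

lemma eig_finite:
  fixes E :: "'n::finite \<Rightarrow> 'n \<Rightarrow> bool"
  assumes sg: "simple_graph E"
  shows "finite {l. adj_eigenvalue E l}"
proof -
  let ?A = "adjacency_matrix E"
  let ?L = "{l. adj_eigenvalue E l}"
  define f where "f l = (SOME x::real^'n. x \<noteq> 0 \<and> ?A *v x = l *\<^sub>R x)" for l
  have fp: "f l \<noteq> 0 \<and> ?A *v f l = l *\<^sub>R f l" if "l \<in> ?L" for l
    using that unfolding f_def adj_eigenvalue_def mem_Collect_eq by (rule someI_ex)
  have inj: "inj_on f ?L"
  proof (rule inj_onI)
    fix a b assume a: "a \<in> ?L" and b: "b \<in> ?L" and e: "f a = f b"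
    have "a *\<^sub>R f a = ?A *v f a" using fp[OF a] by simp
    also have "\<dots> = ?A *v f b" by (simp only: e)
    also have "\<dots> = b *\<^sub>R f b" using fp[OF b] by simp
    also have "\<dots> = b *\<^sub>R f a" by (simp only: e)
    finally have "a *\<^sub>R f a = b *\<^sub>R f a" .
    thus "a = b" using fp[OF a] by (simp only: scaleR_cancel_right) simp
  qed
  have "pairwise orthogonal (f ` ?L)"
  proof (rule pairwiseI)
    fix x y assume "x \<in> f ` ?L" "y \<in> f ` ?L" "x \<noteq> y"
    then obtain a b where a: "a \<in> ?L" "x = f a" and b: "b \<in> ?L" "y = f b" and ab: "a \<noteq> b" by auto
    have "a * (x \<bullet> y) = (?A *v x) \<bullet> y" using fp[OF a(1)] a(2) by simp
    also have "\<dots> = x \<bullet> (?A *v y)" by (rule eig_sym[OF sg])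
    also have "\<dots> = b * (x \<bullet> y)" using fp[OF b(1)] b(2) by simp
    finally have "(a - b) * (x \<bullet> y) = 0" by (simp add: algebra_simps)
    thus "orthogonal x y" using ab by (simp add: orthogonal_def)
  qed
  hence "finite (f ` ?L)" by (rule pairwise_orthogonal_imp_finite)
  thus ?thesis using inj by (rule finite_imageD)
qed



theorem mainTheorem9:
  fixes E :: "'n::finite \<Rightarrow> 'n \<Rightarrow> bool"
  assumes "simple_graph E"
    and "has_edge E"
    and "vertex_transitive E"
    and "edge_transitive E"
    and "independence_number E * clique_number E = CARD('n)"
  shows "\<exists>k. regular E k \<and>
           smallest_eigenvalue E = - real k / (real (clique_number E) - 1)"
proof -
  note sg = assms(1) and he = assms(2) and vt = assms(3) and et = assms(4) and prod = assms(5)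
  obtain x0 y0 where e0: "E x0 y0" using he by (auto simp: has_edge_def)
  define k where "k = card {y. E x0 y}"
  have reg: "regular E k" unfolding k_def by (rule vt_regular[OF vt])
  define al where "al = independence_number E"
  define om where "om = clique_number E"
  define n where "n = CARD('n)"
  have ie: "independent_set E {}" by (simp add: independent_set_def)
  have ce: "clique E {}" by (simp add: clique_def)
  obtain S where S: "independent_set E S" "card S = al"
    using max_card(1)[of "independent_set E", OF ie] unfolding al_def independence_number_def by blast
  obtain C where C: "clique E C" "card C = om"
    using max_card(1)[of "clique E", OF ce] unfolding om_def clique_number_def by blast
  have x0y0: "x0 \<noteq> y0" using sg e0 by (auto simp: simple_graph_def)
  have "clique E {x0, y0}" using sg e0 by (auto simp: clique_def simple_graph_def)
  hence "card {x0, y0} \<le> om" using max_card(2)[of "clique E", OF ce] unfolding om_def clique_number_def by blast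
  hence om2: "om \<ge> 2" using x0y0 by simp
  have prod': "al * om = n" using prod by (simp add: al_def om_def n_def)
  have npos: "n > 0" by (simp add: n_def)
  have al1: "al \<ge> 1" using prod' npos by (cases al) auto
  have "al * 1 < al * om" using al1 om2 by (intro mult_strict_left_mono) auto
  hence alltn: "al < n" using prod' by simp
  define w where "w = real om - 1"
  have wpos: "w > 0" using om2 unfolding w_def by simp
  define \<mu> where "\<mu> = - real k / w"
  define N where "N v = (\<Sum>i\<in>UNIV. (v i)\<^sup>2)" for v :: "'n \<Rightarrow> real"
  have QB: "0 \<le> w * Qf E v + real k * N v" for v
  proof -
    have cge: "card C \<ge> 1" using C(2) om2 by simp
    show ?thesis using quad_bound[OF sg he vt et C(1) reg cge, of v] unfolding C(2) w_def N_def .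
  qed
  have lower: "\<mu> \<le> l" if el: "adj_eigenvalue E l" for l
  proof -
    obtain x :: "real^'n" where x: "x \<noteq> 0" "adjacency_matrix E *v x = l *\<^sub>R x"
      using el unfolding adj_eigenvalue_def by blast
    have row: "(\<Sum>j\<in>UNIV. if E i j then x $ j else 0) = l * x $ i" for i
      using arg_cong[OF x(2), of "\<lambda>y. y $ i"] by (simp add: adj_mult)
    have "Qf E (\<lambda>i. x $ i) = (\<Sum>i\<in>UNIV. x $ i * (\<Sum>j\<in>UNIV. if E i j then x $ j else 0))"
      unfolding Qf_def sum_distrib_left by (intro sum.cong refl) simp
    also have "\<dots> = l * N (\<lambda>i. x $ i)" by (simp add: row N_def sum_distrib_left power2_eq_square mult_ac)
    finally have Qv: "Qf E (\<lambda>i. x $ i) = l * N (\<lambda>i. x $ i)" .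
    have "\<exists>i. x $ i \<noteq> 0" using x(1) by (simp add: vec_eq_iff)
    then obtain i where "x $ i \<noteq> 0" by blast
    hence "N (\<lambda>i. x $ i) > 0" unfolding N_def
      by (intro sum_pos2[where i=i]) auto
    moreover have "0 \<le> (w * l + real k) * N (\<lambda>i. x $ i)" using QB[of "\<lambda>i. x $ i"] Qv by (simp add: algebra_simps)
    ultimately have "0 \<le> w * l + real k" by (simp add: zero_le_mult_iff)
    thus ?thesis using wpos unfolding \<mu>_def by (simp add: field_simps)
  qed
  define c where "c = real al / real n"
  define a where "a i = (if i \<in> S then 1 else 0) - c" for i
  define M where "M i j = w * (if E i j then 1 else 0) + (if i = j then real k else 0)" for i j
  have Msym: "M i j = M j i" for i j using sg unfolding M_def simple_graph_def by auto
  have PM: "(\<Sum>i\<in>UNIV. \<Sum>j\<in>UNIV. M i j * u i * u j) = w * Qf E u + real k * N u" for u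
  proof -
    have "(\<Sum>i\<in>UNIV. \<Sum>j\<in>UNIV. M i j * u i * u j)
        = (\<Sum>i\<in>UNIV. \<Sum>j\<in>UNIV. w * (if E i j then u i * u j else 0) + (if i = j then real k * (u i)\<^sup>2 else 0))"
      unfolding M_def by (intro sum.cong refl) (auto simp: algebra_simps power2_eq_square)
    also have "\<dots> = w * Qf E u + real k * N u"
      by (simp add: sum.distrib sum_distrib_left Qf_def N_def)
    finally show ?thesis .
  qed
  have Pa: "w * Qf E a + real k * N a = 0"
  proof -
    have q: "Qf E a = c\<^sup>2 * real n * real k - 2 * c * real al * real k"
      unfolding a_def using indep_Q[OF sg reg S(1), of c] S(2) by (simp add: n_def)
    have nn: "N a = real al - 2 * c * real al + c\<^sup>2 * real n"
      unfolding N_def a_def using indep_N[of S c] S(2) by (simp add: n_def)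
    have rn: "real n = real al * real om" using prod' by (metis of_nat_mult)
    have "real n > 0" using npos by simp
    have "om \<noteq> 0" using om2 by simp
    show ?thesis unfolding q nn w_def c_def using rn \<open>real n > 0\<close> \<open>om \<noteq> 0\<close>
      by (simp add: field_simps power2_eq_square)
  qed
  have Mz: "(\<Sum>j\<in>UNIV. M i j * a j) = 0" for i
    by (rule psd_zero[OF Msym]) (simp_all add: PM QB Pa)
  have eigrow: "(\<Sum>j\<in>UNIV. if E i j then a j else 0) = \<mu> * a i" for i
  proof -
    have "(\<Sum>j\<in>UNIV. M i j * a j) = w * (\<Sum>j\<in>UNIV. if E i j then a j else 0) + real k * a i"
    proof -
      have "(\<Sum>j\<in>UNIV. M i j * a j) = (\<Sum>j\<in>UNIV. w * (if E i j then a j else 0) + (if i = j then real k * a j else 0))"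
        unfolding M_def by (intro sum.cong refl) (auto simp: algebra_simps)
      also have "\<dots> = w * (\<Sum>j\<in>UNIV. if E i j then a j else 0) + real k * a i"
        by (simp add: sum.distrib sum_distrib_left)
      finally show ?thesis .
    qed
    hence "w * (\<Sum>j\<in>UNIV. if E i j then a j else 0) = - real k * a i" using Mz[of i] by simp
    thus ?thesis using wpos unfolding \<mu>_def by (simp add: field_simps)
  qed
  have upper: "adj_eigenvalue E \<mu>"
    unfolding adj_eigenvalue_def
  proof (intro exI conjI)
    let ?x = "\<chi> i. a i"
    have "S \<noteq> UNIV" using alltn S(2) unfolding n_def by auto
    then obtain i where "i \<notin> S" by auto
    moreover have "c > 0" unfolding c_def using al1 npos by simp
    ultimately have "?x $ i \<noteq> 0" by (simp add: a_def)
    thus "?x \<noteq> 0" by (auto simp: vec_eq_iff)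
    show "adjacency_matrix E *v ?x = \<mu> *\<^sub>R ?x"
      by (simp add: vec_eq_iff adj_mult eigrow cong: if_cong)
  qed
  have "smallest_eigenvalue E = \<mu>"
    unfolding smallest_eigenvalue_def
    by (rule Min_eqI[OF eig_finite[OF sg]]) (auto simp: lower upper)
  thus ?thesis using reg unfolding \<mu>_def w_def om_def by blast
qed


end
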